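(* Let $R$ be a unital commutative Hausdorff topological ring whose group of units $R^\times$ is dense in $R$, and let $\lambda=\lambda^n$ with $n\in\mathbb N\cup\{\infty\}$. Then the group of units $\lambda^\times$ is dense in $\lambda$.
   Context: For $n\in\mathbb N$, $\lambda^n=R[\theta_1,\dots,\theta_n]$ is the Grassmann algebra over $R$ on odd generators $\theta_1,\dots,\theta_n$, i.e. $\lambda^n=\bigoplus_I R\theta_I$ over strictly increasing multi-indices $I$, with the product topology; $\lambda^\infty=R[\theta_i:i\in\mathbb N]=\bigcup_n\lambda^n$ with the direct limit topology with respect to the inclusions $\lambda^n\to\lambda^\infty$. *)

theory Defs
  imports "HOL-Analysis.Analysis" "HOL-Library.Extended_Nat"
begin

text \<open>An element sum_I r_I theta_I is represented by its coefficient function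
  nat set => R; the generators are theta_i with i < N (indices start at 0).\<close>

definition grass_carrier :: "enat \<Rightarrow> (nat set \<Rightarrow> 'a::zero) set" where
  "grass_carrier N = {f. finite {I. f I \<noteq> 0} \<and>
      (\<forall>I. f I \<noteq> 0 \<longrightarrow> finite I \<and> (\<forall>i\<in>I. enat i < N))}"

text \<open>Sign of theta_I theta_J = sign * theta_(I union J) for disjoint I, J.\<close>
definition grass_sign :: "nat set \<Rightarrow> nat set \<Rightarrow> 'a::comm_ring_1" where
  "grass_sign I J = (- 1) ^ card {(i, j). i \<in> I \<and> j \<in> J \<and> j < i}"

definition grass_mult :: "(nat set \<Rightarrow> 'a::comm_ring_1) \<Rightarrow> (nat set \<Rightarrow> 'a) \<Rightarrow> (nat set \<Rightarrow> 'a)" where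
  "grass_mult a b = (\<lambda>K. \<Sum>I\<in>Pow K. grass_sign I (K - I) * a I * b (K - I))"

definition grass_one :: "nat set \<Rightarrow> 'a::comm_ring_1" where
  "grass_one = (\<lambda>I. if I = {} then 1 else 0)"

definition grass_units :: "enat \<Rightarrow> (nat set \<Rightarrow> 'a::comm_ring_1) set" where
  "grass_units N = {x \<in> grass_carrier N. \<exists>y \<in> grass_carrier N.
      grass_mult x y = grass_one \<and> grass_mult y x = grass_one}"

definition grass_fin_top :: "nat \<Rightarrow> (nat set \<Rightarrow> 'a::{zero,topological_space}) topology" where
  "grass_fin_top n = subtopology (product_topology (\<lambda>_. euclidean) UNIV) (grass_carrier (enat n))"

text \<open>Topology on lambda^N: for finite N the product topology; for N = infinity
  the direct limit (final) topology w.r.t. the inclusions lambda^n -> lambda^infinity.\<close>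
definition grass_top :: "enat \<Rightarrow> (nat set \<Rightarrow> 'a::{zero,topological_space}) topology" where
  "grass_top N = (case N of enat n \<Rightarrow> grass_fin_top n
     | \<infinity> \<Rightarrow> topology (\<lambda>U. U \<subseteq> grass_carrier \<infinity> \<and>
                          (\<forall>n. openin (grass_fin_top n) (U \<inter> grass_carrier (enat n)))))"

end

theory Submission
  imports Defs
begin

definition cnt :: "nat set \<Rightarrow> nat set \<Rightarrow> nat" where
  "cnt I J = card {(i, j). i \<in> I \<and> j \<in> J \<and> j < i}"

lemma sign_cnt: "grass_sign I J = (-1) ^ cnt I J"
  by (simp add: grass_sign_def cnt_def)

lemma cnt_Un_left:
  assumes "finite I" "finite J" "finite M" "I \<inter> J = {}"
  shows "cnt (I \<union> J) M = cnt I M + cnt J M"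
proof -
  have e: "{(i, j). i \<in> I \<union> J \<and> j \<in> M \<and> j < i} =
     {(i, j). i \<in> I \<and> j \<in> M \<and> j < i} \<union> {(i, j). i \<in> J \<and> j \<in> M \<and> j < i}" by auto
  have f1: "finite {(i, j). i \<in> I \<and> j \<in> M \<and> j < i}"
    by (rule finite_subset[of _ "I \<times> M"]) (use assms in auto)
  have f2: "finite {(i, j). i \<in> J \<and> j \<in> M \<and> j < i}"
    by (rule finite_subset[of _ "J \<times> M"]) (use assms in auto)
  show ?thesis unfolding cnt_def e
    by (rule card_Un_disjoint[OF f1 f2]) (use assms in auto)
qed

lemma cnt_Un_right:
  assumes "finite I" "finite J" "finite M" "J \<inter> M = {}"
  shows "cnt I (J \<union> M) = cnt I J + cnt I M"
proof -
  have e: "{(i, j). i \<in> I \<and> j \<in> J \<union> M \<and> j < i} =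
     {(i, j). i \<in> I \<and> j \<in> J \<and> j < i} \<union> {(i, j). i \<in> I \<and> j \<in> M \<and> j < i}" by auto
  have f1: "finite {(i, j). i \<in> I \<and> j \<in> J \<and> j < i}"
    by (rule finite_subset[of _ "I \<times> J"]) (use assms in auto)
  have f2: "finite {(i, j). i \<in> I \<and> j \<in> M \<and> j < i}"
    by (rule finite_subset[of _ "I \<times> M"]) (use assms in auto)
  show ?thesis unfolding cnt_def e
    by (rule card_Un_disjoint[OF f1 f2]) (use assms in auto)
qed

lemma sign_cocycle:
  assumes "finite I" "finite J" "finite M" "I \<inter> J = {}" "J \<inter> M = {}" "I \<inter> M = {}"
  shows "(grass_sign I J * grass_sign (I \<union> J) M :: 'a::comm_ring_1) = grass_sign I (J \<union> M) * grass_sign J M"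
  unfolding sign_cnt using assms
  by (simp add: cnt_Un_left cnt_Un_right power_add ac_simps)

lemma sign_empty1 [simp]: "grass_sign {} J = 1"
  by (simp add: grass_sign_def)
lemma sign_empty2 [simp]: "grass_sign I {} = 1"
  by (simp add: grass_sign_def)

lemma mult_infinite: "infinite K \<Longrightarrow> grass_mult a b K = 0"
  by (simp add: grass_mult_def)

lemma one_mult: "finite K \<Longrightarrow> grass_mult grass_one a K = a K"
proof -
  assume K: "finite K"
  have "grass_mult grass_one a K = (\<Sum>I\<in>Pow K. grass_sign I (K - I) * grass_one I * a (K - I))"
    by (simp add: grass_mult_def)
  also have "\<dots> = (\<Sum>I\<in>{{}}. grass_sign I (K - I) * grass_one I * a (K - I))"
    by (rule sum.mono_neutral_right) (auto simp: K grass_one_def)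
  finally show ?thesis by (simp add: grass_one_def)
qed

lemma mult_one: "finite K \<Longrightarrow> grass_mult a grass_one K = a K"
proof -
  assume K: "finite K"
  have "grass_mult a grass_one K = (\<Sum>I\<in>Pow K. grass_sign I (K - I) * a I * grass_one (K - I))"
    by (simp add: grass_mult_def)
  also have "\<dots> = (\<Sum>I\<in>{K}. grass_sign I (K - I) * a I * grass_one (K - I))"
    by (rule sum.mono_neutral_right) (auto simp: K grass_one_def)
  finally show ?thesis by (simp add: grass_one_def)
qed

lemma mult_assoc_at:
  fixes a b c :: "nat set \<Rightarrow> 'a::comm_ring_1"
  assumes K: "finite K"
  shows "grass_mult (grass_mult a b) c K = grass_mult a (grass_mult b c) K"
proof -
  define P where "P = Sigma (Pow K) (\<lambda>I. Pow (K - I))"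
  define g where "g = (\<lambda>(I,J). grass_sign I J * grass_sign (I \<union> J) (K - I - J) * a I * b J * c (K - I - J))"
  have "grass_mult (grass_mult a b) c K =
      (\<Sum>L\<in>Pow K. \<Sum>I\<in>Pow L. grass_sign L (K - L) * grass_sign I (L - I) * a I * b (L - I) * c (K - L))"
    by (simp add: grass_mult_def sum_distrib_left sum_distrib_right mult.assoc)
  also have "\<dots> = (\<Sum>(L,I)\<in>Sigma (Pow K) Pow. grass_sign L (K - L) * grass_sign I (L - I) * a I * b (L - I) * c (K - L))"
    by (rule sum.Sigma) (use K in \<open>auto intro: finite_subset\<close>)
  also have "\<dots> = sum g P"
  proof (rule sum.reindex_bij_witness[where i="\<lambda>(I,J). (I \<union> J, I)" and j="\<lambda>(L,I). (I, L - I)"])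
    fix x assume "x \<in> Sigma (Pow K) Pow" then show "(case case x of (L, I) \<Rightarrow> (I, L - I) of (I, J) \<Rightarrow> (I \<union> J, I)) = x" by auto
  next
    fix x assume "x \<in> Sigma (Pow K) Pow" then show "(case x of (L, I) \<Rightarrow> (I, L - I)) \<in> P" by (auto simp: P_def)
  next
    fix x assume "x \<in> P" then show "(case case x of (I, J) \<Rightarrow> (I \<union> J, I) of (L, I) \<Rightarrow> (I, L - I)) = x" by (auto simp: P_def)
  next
    fix x assume "x \<in> P" then show "(case x of (I, J) \<Rightarrow> (I \<union> J, I)) \<in> Sigma (Pow K) Pow" by (auto simp: P_def)
  next
    fix x assume "x \<in> Sigma (Pow K) Pow"
    then obtain L I where x: "x = (L,I)" "L \<subseteq> K" "I \<subseteq> L" by auto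
    have e1: "I \<union> (L - I) = L" using x by auto
    have e2: "K - I - (L - I) = K - L" using x by auto
    show "g (case x of (L, I) \<Rightarrow> (I, L - I)) = (case x of (L, I) \<Rightarrow> grass_sign L (K - L) * grass_sign I (L - I) * a I * b (L - I) * c (K - L))"
      using x by (simp add: g_def e1 e2 Un_absorb1 mult.commute mult.left_commute)
  qed
  also have "\<dots> = (\<Sum>(I,J)\<in>P. grass_sign I (K - I) * grass_sign J (K - I - J) * a I * b J * c (K - I - J))"
  proof (rule sum.cong[OF refl])
    fix x assume "x \<in> P"
    then obtain I J where x: "x = (I,J)" "I \<subseteq> K" "J \<subseteq> K - I" by (auto simp: P_def)
    have fI: "finite I" "finite J" using x K by (auto intro: finite_subset)
    have e: "K - I = J \<union> (K - I - J)" using x by auto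
    have h: "grass_sign I J * grass_sign (I \<union> J) (K - I - J) = (grass_sign I (J \<union> (K - I - J)) * grass_sign J (K - I - J) :: 'a)"
      by (rule sign_cocycle) (use x K fI in auto)
    show "g x = (case x of (I,J) \<Rightarrow> grass_sign I (K - I) * grass_sign J (K - I - J) * a I * b J * c (K - I - J))"
    proof -
      have h2: "grass_sign I J * grass_sign (I \<union> J) (K - I - J) = (grass_sign I (K - I) * grass_sign J (K - I - J) :: 'a)"
        using h by (simp only: e[symmetric])
      show ?thesis unfolding g_def x(1) by (simp add: mult.assoc[symmetric] h2)
    qed
  qed
  also have "\<dots> = (\<Sum>I\<in>Pow K. \<Sum>J\<in>Pow (K - I). grass_sign I (K - I) * grass_sign J (K - I - J) * a I * b J * c (K - I - J))"
    unfolding P_def by (rule sum.Sigma[symmetric]) (use K in auto)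
  also have "\<dots> = grass_mult a (grass_mult b c) K"
    by (simp add: grass_mult_def sum_distrib_left sum_distrib_right mult.assoc mult.left_commute)
  finally show ?thesis .
qed


function rinv :: "'a::comm_ring_1 \<Rightarrow> (nat set \<Rightarrow> 'a) \<Rightarrow> nat set \<Rightarrow> 'a" where
  "rinv v x K = (if finite K \<and> K \<noteq> {} then
      - v * (\<Sum>I\<in>Pow K - {{}}. grass_sign I (K - I) * x I * rinv v x (K - I))
     else if K = {} then v else 0)"
  by pat_completeness auto
termination
  by (relation "Wellfounded.measure (\<lambda>(v,x,K). card K)") (auto intro!: psubset_card_mono)

declare rinv.simps[simp del]

lemma rinv_empty: "rinv v x {} = v"
  by (subst rinv.simps) simp

lemma rinv_infinite: "infinite K \<Longrightarrow> rinv v x K = 0"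
  by (subst rinv.simps) auto

lemma rinv_right:
  assumes u: "x {} * v = 1"
  shows "grass_mult x (rinv v x) = grass_one"
proof
  fix K
  show "grass_mult x (rinv v x) K = grass_one K"
  proof (cases "finite K")
    case False
    then show ?thesis by (auto simp: mult_infinite grass_one_def)
  next
    case K: True
    show ?thesis
    proof (cases "K = {}")
      case True
      then show ?thesis using u by (simp add: grass_mult_def grass_one_def rinv_empty)
    next
      case ne: False
      define S where "S = (\<Sum>I\<in>Pow K - {{}}. grass_sign I (K - I) * x I * rinv v x (K - I))"
      have r: "rinv v x K = - v * S" unfolding S_def using K ne by (subst rinv.simps) simp
      have "grass_mult x (rinv v x) K = grass_sign {} (K - {}) * x {} * rinv v x (K - {}) + S"
        unfolding grass_mult_def S_def using K
        by (subst sum.remove[of _ "{}"]) auto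
      also have "\<dots> = - (x {} * v) * S + S" by (simp add: r)
      also have "\<dots> = 0" using u by simp
      finally show ?thesis using ne by (simp add: grass_one_def)
    qed
  qed
qed

lemma rinv_support:
  assumes x: "x \<in> grass_carrier N"
  shows "rinv v x K \<noteq> 0 \<Longrightarrow> K \<subseteq> \<Union>{I. x I \<noteq> 0}"
proof (induction K rule: measure_induct_rule[where f=card])
  case (less K)
  show ?case
  proof (cases "finite K \<and> K \<noteq> {}")
    case False
    then show ?thesis using less.prems by (auto simp: rinv_infinite)
  next
    case True
    define S where "S = (\<Sum>I\<in>Pow K - {{}}. grass_sign I (K - I) * x I * rinv v x (K - I))"
    have r: "rinv v x K = - v * S" unfolding S_def using True by (subst rinv.simps) simp
    then have "S \<noteq> 0" using less.prems by auto
    then obtain I where I: "I \<in> Pow K - {{}}" "grass_sign I (K - I) * x I * rinv v x (K - I) \<noteq> 0"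
      unfolding S_def using sum.not_neutral_contains_not_neutral by blast
    then have xI: "x I \<noteq> 0" and rI: "rinv v x (K - I) \<noteq> 0" by auto
    have "card (K - I) < card K" using I True by (auto intro!: psubset_card_mono)
    then have "K - I \<subseteq> \<Union>{I. x I \<noteq> 0}" using less.IH rI by blast
    moreover have "I \<subseteq> \<Union>{I. x I \<noteq> 0}" using xI by blast
    ultimately show ?thesis by blast
  qed
qed

lemma rinv_carrier:
  assumes x: "x \<in> grass_carrier N"
  shows "rinv v x \<in> grass_carrier N"
proof -
  let ?S = "\<Union>{I. x I \<noteq> 0}"
  have fS: "finite ?S" using x by (auto simp: grass_carrier_def)
  have sub: "{K. rinv v x K \<noteq> 0} \<subseteq> Pow ?S" using rinv_support[OF x] by blast
  have "finite {K. rinv v x K \<noteq> 0}" using finite_subset[OF sub] fS by auto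
  moreover have "\<forall>K. rinv v x K \<noteq> 0 \<longrightarrow> finite K \<and> (\<forall>i\<in>K. enat i < N)"
  proof (intro allI impI)
    fix K assume "rinv v x K \<noteq> 0"
    then have "K \<subseteq> ?S" using rinv_support[OF x] by blast
    then show "finite K \<and> (\<forall>i\<in>K. enat i < N)"
      using x fS by (auto simp: grass_carrier_def intro: finite_subset)
  qed
  ultimately show ?thesis by (simp add: grass_carrier_def)
qed

lemma carrier_infinite: "x \<in> grass_carrier N \<Longrightarrow> infinite K \<Longrightarrow> x K = 0"
  by (auto simp: grass_carrier_def)

lemma unit_crit:
  assumes x: "x \<in> grass_carrier N" and u: "x {} * v = 1"
  shows "x \<in> grass_units N"
proof -
  define y where "y = rinv v x"
  have xy: "grass_mult x y = grass_one" unfolding y_def by (rule rinv_right[of x v, OF u])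
  have yc: "y \<in> grass_carrier N" unfolding y_def by (rule rinv_carrier[OF x])
  have y0: "y {} * x {} = 1" using u by (simp add: y_def rinv_empty mult.commute)
  define w where "w = rinv (x {}) y"
  have yw: "grass_mult y w = grass_one" unfolding w_def by (rule rinv_right[of y "x {}", OF y0])
  have wc: "w \<in> grass_carrier N" unfolding w_def by (rule rinv_carrier[OF yc])
  have "w = x"
  proof
    fix K show "w K = x K"
    proof (cases "finite K")
      case False then show ?thesis using carrier_infinite[OF wc] carrier_infinite[OF x] by simp
    next
      case True
      have "w K = grass_mult grass_one w K" by (rule one_mult[OF True, symmetric])
      also have "\<dots> = grass_mult (grass_mult x y) w K" by (simp add: xy)
      also have "\<dots> = grass_mult x (grass_mult y w) K" by (rule mult_assoc_at[OF True])
      also have "\<dots> = x K" by (simp add: yw mult_one[OF True])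
      finally show ?thesis .
    qed
  qed
  then have "grass_mult y x = grass_one" using yw by simp
  then show ?thesis using x yc xy unfolding grass_units_def by blast
qed


lemma carrier_upd: "x \<in> grass_carrier N \<Longrightarrow> x({} := u) \<in> grass_carrier N"
proof -
  assume x: "x \<in> grass_carrier N"
  have "{I. (x({} := u)) I \<noteq> 0} \<subseteq> insert {} {I. x I \<noteq> 0}" by auto
  moreover have "finite (insert {} {I. x I \<noteq> 0})" using x by (simp add: grass_carrier_def)
  ultimately have "finite {I. (x({} := u)) I \<noteq> 0}" by (rule finite_subset)
  then show ?thesis using x by (auto simp: grass_carrier_def)
qed

lemma topspace_fin: "topspace (grass_fin_top n) = grass_carrier (enat n)"
  by (simp add: grass_fin_top_def)

lemma fin_level:
  assumes x: "x \<in> grass_carrier \<infinity>"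
  shows "\<exists>m. x \<in> grass_carrier (enat m)"
proof -
  let ?S = "\<Union>{I. x I \<noteq> 0}"
  have fS: "finite ?S" using x by (auto simp: grass_carrier_def)
  define m where "m = Suc (Max (insert 0 ?S))"
  have "\<forall>i\<in>?S. i < m" using fS unfolding m_def by (simp add: le_imp_less_Suc)
  then have "x \<in> grass_carrier (enat m)" using x by (auto simp: grass_carrier_def)
  then show ?thesis by blast
qed

lemma fin_dense:
  assumes dense: "closure {x :: 'a :: {comm_ring_1, topological_space}. \<exists>y. x * y = 1} = UNIV"
  assumes x: "x \<in> grass_carrier (enat n)" and T: "openin (grass_fin_top n) T" and xT: "x \<in> T"
  shows "\<exists>u v. u * v = (1::'a) \<and> x({} := u) \<in> T"
proof -
  have "\<exists>U. openin (product_topology (\<lambda>_. euclidean) UNIV) U \<and> T = U \<inter> grass_carrier (enat n)"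
    using T unfolding grass_fin_top_def openin_subtopology .
  then obtain U where U: "openin (product_topology (\<lambda>_. euclidean) UNIV) U" "T = U \<inter> grass_carrier (enat n)"
    by blast
  have cm: "continuous_map euclidean (product_topology (\<lambda>_. euclidean) UNIV) (\<lambda>u::'a. x({} := u))"
    unfolding continuous_map_componentwise_UNIV
  proof
    fix k :: "nat set"
    show "continuous_map euclidean euclidean (\<lambda>u::'a. (x({} := u)) k)"
    proof (cases "k = {}")
      case True
      then show ?thesis using continuous_map_id[of "euclidean :: 'a topology"] by (simp add: id_def)
    next
      case False
      then show ?thesis by (simp add: continuous_map_const)
    qed
  qed
  have "openin euclidean {u \<in> topspace euclidean. x({} := u) \<in> U}"
    by (rule openin_continuous_map_preimage[OF cm U(1)])
  then have op: "open {u::'a. x({} := u) \<in> U}" by simp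
  have "x {} \<in> {u::'a. x({} := u) \<in> U}" using xT U by simp
  then have "{u::'a. x({} := u) \<in> U} \<inter> closure {x :: 'a. \<exists>y. x * y = 1} \<noteq> {}" using dense by blast
  then have "{u::'a. x({} := u) \<in> U} \<inter> {x :: 'a. \<exists>y. x * y = 1} \<noteq> {}"
    using open_Int_closure_eq_empty[OF op] by simp
  then obtain u v where uv: "x({} := u) \<in> U" "u * v = 1" by blast
  have "x({} := u) \<in> T" using uv(1) U(2) carrier_upd[OF x] by simp
  then show ?thesis using uv(2) by blast
qed

lemma int_lem: "openin X (A \<inter> C) \<Longrightarrow> openin X (B \<inter> C) \<Longrightarrow> openin X (A \<inter> B \<inter> C)"
proof -
  assume "openin X (A \<inter> C)" "openin X (B \<inter> C)"
  then have "openin X ((A \<inter> C) \<inter> (B \<inter> C))" by (rule openin_Int)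
  moreover have "(A \<inter> C) \<inter> (B \<inter> C) = A \<inter> B \<inter> C" by blast
  ultimately show ?thesis by simp
qed

lemma union_lem: "(\<And>U. U \<in> K \<Longrightarrow> openin X (U \<inter> C)) \<Longrightarrow> openin X (\<Union>K \<inter> C)"
proof -
  assume "\<And>U. U \<in> K \<Longrightarrow> openin X (U \<inter> C)"
  then have "openin X (\<Union>U\<in>K. U \<inter> C)" by blast
  moreover have "(\<Union>U\<in>K. U \<inter> C) = \<Union>K \<inter> C" by blast
  ultimately show ?thesis by simp
qed

lemma istop_inf: "istopology (\<lambda>U. U \<subseteq> grass_carrier \<infinity> \<and>
                          (\<forall>n. openin (grass_fin_top n) (U \<inter> grass_carrier (enat n))))"
  unfolding istopology_def
  by (auto intro!: int_lem union_lem)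

lemma openin_inf: "openin (grass_top \<infinity>) U \<longleftrightarrow> U \<subseteq> grass_carrier \<infinity> \<and>
                          (\<forall>n. openin (grass_fin_top n) (U \<inter> grass_carrier (enat n)))"
  unfolding grass_top_def by (simp add: topology_inverse'[OF istop_inf])

lemma carrier_mono: "grass_carrier (enat n) \<subseteq> grass_carrier \<infinity>"
  by (auto simp: grass_carrier_def)

lemma topspace_grass: "topspace (grass_top N) = grass_carrier N"
proof (cases N)
  case (enat n) then show ?thesis by (simp add: grass_top_def topspace_fin)
next
  case infinity
  have "openin (grass_top \<infinity>) (grass_carrier \<infinity>)"
    unfolding openin_inf
  proof (intro conjI allI)
    fix n
    have "grass_carrier \<infinity> \<inter> grass_carrier (enat n) = topspace (grass_fin_top n)"
      using carrier_mono by (auto simp: topspace_fin)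
    then show "openin (grass_fin_top n) (grass_carrier \<infinity> \<inter> grass_carrier (enat n))" by (metis openin_topspace)
  qed simp
  then have "grass_carrier \<infinity> \<subseteq> topspace (grass_top \<infinity>)" by (rule openin_subset)
  moreover have "topspace (grass_top \<infinity>) \<subseteq> grass_carrier \<infinity>"
    unfolding topspace_def using openin_inf by blast
  ultimately show ?thesis using infinity by blast
qed

theorem lemma2p2:
  fixes N :: enat
  assumes "closure {x :: 'a :: {comm_ring_1, topological_ab_group_add,
                                  topological_semigroup_mult, t2_space}. \<exists>y. x * y = 1} = UNIV"
  shows "(grass_top N) closure_of (grass_units N :: (nat set \<Rightarrow> 'a) set) = grass_carrier N"
proof
  show "(grass_top N) closure_of (grass_units N :: (nat set \<Rightarrow> 'a) set) \<subseteq> grass_carrier N"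
    using closure_of_subset_topspace[of "grass_top N" "grass_units N"] by (simp add: topspace_grass)
next
  show "grass_carrier N \<subseteq> (grass_top N) closure_of (grass_units N :: (nat set \<Rightarrow> 'a) set)"
  proof
    fix x :: "nat set \<Rightarrow> 'a" assume x: "x \<in> grass_carrier N"
    show "x \<in> (grass_top N) closure_of (grass_units N)"
      unfolding in_closure_of
    proof (intro conjI allI impI)
      show "x \<in> topspace (grass_top N)" using x by (simp add: topspace_grass)
      fix T assume T: "x \<in> T \<and> openin (grass_top N) T"
      obtain m where xm: "x \<in> grass_carrier (enat m)" and Tm: "openin (grass_fin_top m) (T \<inter> grass_carrier (enat m))"
      proof (cases N)
        case (enat n)
        have "openin (grass_fin_top n) T" using T enat by (simp add: grass_top_def)
        moreover have "T \<subseteq> grass_carrier (enat n)" using openin_subset[OF calculation] by (simp add: topspace_fin)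
        ultimately have o: "openin (grass_fin_top n) (T \<inter> grass_carrier (enat n))" by (simp add: Int_absorb2)
        have "x \<in> grass_carrier (enat n)" using x enat by simp
        then show ?thesis using o by (rule that)
      next
        case infinity
        obtain m where "x \<in> grass_carrier (enat m)" using fin_level[of x] x infinity by auto
        moreover have "openin (grass_fin_top m) (T \<inter> grass_carrier (enat m))" using T infinity by (simp add: openin_inf)
        ultimately show ?thesis by (rule that)
      qed
      obtain u v where uv: "u * v = (1::'a)" and uT: "x({} := u) \<in> T \<inter> grass_carrier (enat m)"
      proof -
        have "x \<in> T \<inter> grass_carrier (enat m)" using T xm by blast
        from fin_dense[OF assms xm Tm this] show ?thesis using that by blast
      qed
      have "x({} := u) \<in> grass_carrier N" using carrier_upd[OF x] .
      then have "x({} := u) \<in> grass_units N" by (rule unit_crit) (use uv in simp)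
      then show "\<exists>y. y \<in> grass_units N \<and> y \<in> T" using uT by blast
    qed
  qed
qed

end
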